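(* In the reward-seeking setting, for every instance and every $b>1$, the naive agent with present-bias parameter $b$ satisfies $b\cdot R_n(s)\ge R_o(s)$; that is, its reward ratio is at most $b$.
   Context: Reward-seeking instance: a finite directed acyclic graph $G=(V,E)$ with nonnegative edge rewards $r(u,v)$, start node $s$ and target node $t$, where $t$ is the unique node with no outgoing edges; the agent must travel from $s$ to $t$ and wishes to collect as much reward as possible. $R_o(u)$ is the maximum total reward of a $u$–$t$ path. The naive agent with bias $b$: $R_n(t)=0$, and for $u\ne t$, $S^{(R)}_n(u)\in\arg\max_{v:(u,v)\in E}\big(b\cdot r(u,v)+R_o(v)\big)$ and $R_n(u)=r(u,S^{(R)}_n(u))+R_n(S^{(R)}_n(u))$; $R_n(s)$ is the reward it collects. The reward ratio is $R_o(s)/R_n(s)$. *)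

theory Defs
  imports Complex_Main
begin

definition reward_instance ::
  "'a set \<Rightarrow> ('a \<times> 'a) set \<Rightarrow> ('a \<Rightarrow> 'a \<Rightarrow> real) \<Rightarrow> 'a \<Rightarrow> 'a \<Rightarrow> bool" where
  "reward_instance V E r s t \<longleftrightarrow>
     finite V \<and> E \<subseteq> V \<times> V \<and> acyclic E \<and> s \<in> V \<and> t \<in> V \<and>
     (\<forall>(u,v)\<in>E. 0 \<le> r u v) \<and>
     (\<forall>v. (t, v) \<notin> E) \<and>
     (\<forall>u\<in>V. u \<noteq> t \<longrightarrow> (\<exists>v. (u, v) \<in> E))"

definition is_path :: "('a \<times> 'a) set \<Rightarrow> 'a \<Rightarrow> 'a \<Rightarrow> 'a list \<Rightarrow> bool" where
  "is_path E u t p \<longleftrightarrow> p \<noteq> [] \<and> hd p = u \<and> last p = t \<and>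
     (\<forall>i < length p - 1. (p ! i, p ! Suc i) \<in> E)"

definition path_reward :: "('a \<Rightarrow> 'a \<Rightarrow> real) \<Rightarrow> 'a list \<Rightarrow> real" where
  "path_reward r p = (\<Sum>i < length p - 1. r (p ! i) (p ! Suc i))"

definition R_opt :: "('a \<times> 'a) set \<Rightarrow> ('a \<Rightarrow> 'a \<Rightarrow> real) \<Rightarrow> 'a \<Rightarrow> 'a \<Rightarrow> real" where
  "R_opt E r t u = Max (path_reward r ` {p. is_path E u t p})"

text \<open>S is a valid (arbitrary tie-breaking) choice rule of the naive agent with bias b.\<close>
definition naive_choice ::
  "'a set \<Rightarrow> ('a \<times> 'a) set \<Rightarrow> ('a \<Rightarrow> 'a \<Rightarrow> real) \<Rightarrow> 'a \<Rightarrow> real \<Rightarrow> ('a \<Rightarrow> 'a) \<Rightarrow> bool" where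
  "naive_choice V E r t b S \<longleftrightarrow>
     (\<forall>u\<in>V. u \<noteq> t \<longrightarrow> (u, S u) \<in> E \<and>
        (\<forall>v. (u, v) \<in> E \<longrightarrow>
           b * r u v + R_opt E r t v \<le> b * r u (S u) + R_opt E r t (S u)))"

text \<open>R_n(u): reward collected by following S from u until t is reached
  (equivalently R_n(t)=0, R_n(u) = r(u,S u) + R_n(S u)).\<close>
definition R_naive :: "('a \<Rightarrow> 'a \<Rightarrow> real) \<Rightarrow> 'a \<Rightarrow> ('a \<Rightarrow> 'a) \<Rightarrow> 'a \<Rightarrow> real" where
  "R_naive r t S u =
     (let k = (LEAST k. (S ^^ k) u = t)
      in \<Sum>i < k. r ((S ^^ i) u) ((S ^^ Suc i) u))"

end

theory Submission
  imports Defs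
begin

lemma chain_trancl:
  assumes "\<And>k. k < n \<Longrightarrow> (f k, f (Suc k)) \<in> E"
  shows "i < j \<Longrightarrow> j \<le> n \<Longrightarrow> (f i, f j) \<in> E\<^sup>+"
proof (induction j)
  case 0 then show ?case by simp
next
  case (Suc j)
  have e: "(f j, f (Suc j)) \<in> E" using Suc.prems assms by simp
  show ?case
  proof (cases "i = j")
    case True then show ?thesis using e by auto
  next
    case False
    then have "(f i, f j) \<in> E\<^sup>+" using Suc by simp
    then show ?thesis using e by (meson trancl.trancl_into_trancl)
  qed
qed

lemma walk_in_V:
  assumes "reward_instance V E r s t" "naive_choice V E r t b S" "u \<in> V"
  shows "(\<forall>j<i. (S^^j) u \<noteq> t) \<Longrightarrow> (S^^i) u \<in> V"
proof (induction i)
  case 0 then show ?case using assms by simp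
next
  case (Suc i)
  then have iv: "(S^^i) u \<in> V" and nt: "(S^^i) u \<noteq> t" by auto
  then have "((S^^i) u, S ((S^^i) u)) \<in> E" using assms(2) unfolding naive_choice_def by blast
  then show ?case using assms(1) unfolding reward_instance_def by auto
qed

lemma walk_edge:
  assumes "reward_instance V E r s t" "naive_choice V E r t b S" "u \<in> V"
    "\<forall>j\<le>i. (S^^j) u \<noteq> t"
  shows "((S^^i) u, (S^^Suc i) u) \<in> E"
proof -
  have "(S^^i) u \<in> V" using walk_in_V[OF assms(1-3)] assms(4) by auto
  then show ?thesis using assms(2,4) unfolding naive_choice_def by auto
qed

lemma reach:
  assumes "reward_instance V E r s t" "naive_choice V E r t b S" "u \<in> V"
  shows "\<exists>k. (S^^k) u = t"
proof (rule ccontr)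
  assume "\<not> ?thesis"
  then have nt: "\<forall>k. (S^^k) u \<noteq> t" by auto
  let ?w = "\<lambda>k. (S^^k) u"
  have inV: "?w k \<in> V" for k using walk_in_V[OF assms] nt by auto
  have ed: "(?w k, ?w (Suc k)) \<in> E" for k using walk_edge[OF assms] nt by auto
  have "range ?w \<subseteq> V" using inV by auto
  then have "finite (range ?w)" using assms(1) unfolding reward_instance_def by (meson finite_subset)
  then have "\<not> inj ?w" using finite_imageD infinite_UNIV_nat by blast
  then obtain i j where ij: "i \<noteq> j" "?w i = ?w j" unfolding inj_def by blast
  then obtain a c where ac: "a < c" "?w a = ?w c" by (metis linorder_neqE_nat)
  have "(?w a, ?w c) \<in> E\<^sup>+" using chain_trancl[of c ?w E a c] ed ac by auto
  then show False using ac assms(1) unfolding reward_instance_def acyclic_def by auto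
qed

lemma path_distinct:
  assumes "acyclic E" "is_path E u t p"
  shows "distinct p"
proof -
  have ed: "\<And>k. k < length p - 1 \<Longrightarrow> (p ! k, p ! Suc k) \<in> E" using assms(2) unfolding is_path_def by auto
  show ?thesis unfolding distinct_conv_nth
  proof (intro allI impI)
    fix i j assume h: "i < length p" "j < length p" "i \<noteq> j"
    show "p ! i \<noteq> p ! j"
    proof
      assume eq: "p ! i = p ! j"
      obtain a c where ac: "a < c" "c < length p" "p ! a = p ! c"
        using h eq by (metis linorder_neqE_nat)
      have "(p ! a, p ! c) \<in> E\<^sup>+" using chain_trancl[of "length p - 1" "nth p" E a c] ed ac by auto
      then show False using ac assms(1) unfolding acyclic_def by auto
    qed
  qed
qed

lemma path_in_V:
  assumes "E \<subseteq> V \<times> V" "u \<in> V" "is_path E u t p"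
  shows "set p \<subseteq> V"
proof -
  have "p ! i \<in> V" if "i < length p" for i
    using that
  proof (induction i)
    case 0 then show ?case using assms unfolding is_path_def by (metis hd_conv_nth)
  next
    case (Suc i)
    then have "(p ! i, p ! Suc i) \<in> E" using assms(3) unfolding is_path_def by auto
    then show ?case using assms(1) by auto
  qed
  then show ?thesis by (auto simp: in_set_conv_nth)
qed

lemma paths_finite:
  assumes "reward_instance V E r s t" "u \<in> V"
  shows "finite {p. is_path E u t p}"
proof -
  have "{p. is_path E u t p} \<subseteq> {xs. set xs \<subseteq> V \<and> distinct xs}"
  proof
    fix p assume "p \<in> {p. is_path E u t p}"
    then have ip: "is_path E u t p" by simp
    have a: "acyclic E" "E \<subseteq> V \<times> V" using assms(1) unfolding reward_instance_def by auto
    show "p \<in> {xs. set xs \<subseteq> V \<and> distinct xs}"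
      using path_distinct[OF a(1) ip] path_in_V[OF a(2) assms(2) ip] by simp
  qed
  moreover have "finite V" using assms(1) unfolding reward_instance_def by simp
  ultimately show ?thesis using finite_subset_distinct finite_subset by blast
qed

lemma paths_nonempty:
  assumes "reward_instance V E r s t" "naive_choice V E r t b S" "u \<in> V"
  shows "\<exists>p. is_path E u t p"
proof -
  obtain k0 where "(S^^k0) u = t" using reach[OF assms] by blast
  define k where "k = (LEAST k. (S^^k) u = t)"
  have kt: "(S^^k) u = t" unfolding k_def by (rule LeastI) fact
  have nt: "\<forall>j<k. (S^^j) u \<noteq> t" unfolding k_def using not_less_Least by blast
  define p where "p = map (\<lambda>i. (S^^i) u) [0..<Suc k]"
  have "is_path E u t p"
    unfolding is_path_def p_def
  proof (intro conjI allI impI)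
    show "map (\<lambda>i. (S ^^ i) u) [0..<Suc k] \<noteq> []" by simp
    show "hd (map (\<lambda>i. (S ^^ i) u) [0..<Suc k]) = u" by (simp add: upt_conv_Cons del: upt_Suc)
    show "last (map (\<lambda>i. (S ^^ i) u) [0..<Suc k]) = t" using kt by (simp add: last_map)
    fix i assume "i < length (map (\<lambda>i. (S ^^ i) u) [0..<Suc k]) - 1"
    then have "i < k" by simp
    then have "((S^^i) u, (S^^Suc i) u) \<in> E" using walk_edge[OF assms, of i] nt by auto
    then show "(map (\<lambda>i. (S ^^ i) u) [0..<Suc k] ! i, map (\<lambda>i. (S ^^ i) u) [0..<Suc k] ! Suc i) \<in> E"
      using \<open>i < k\<close> by (simp del: upt_Suc)
  qed
  then show ?thesis by blast
qed

lemma R_opt_t: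
  assumes "reward_instance V E r s t"
  shows "R_opt E r t t = 0"
proof -
  have "{p. is_path E t t p} = {[t]}"
  proof (intro set_eqI iffI)
    fix p assume "p \<in> {p. is_path E t t p}"
    then have ip: "is_path E t t p" by simp
    have "length p = 1"
    proof (rule ccontr)
      assume "length p \<noteq> 1"
      then have "0 < length p - 1" using ip unfolding is_path_def by (cases p) auto
      then have "(p ! 0, p ! 1) \<in> E" using ip unfolding is_path_def by auto
      moreover have "p ! 0 = t" using ip unfolding is_path_def by (metis hd_conv_nth)
      ultimately show False using assms unfolding reward_instance_def by auto
    qed
    then show "p \<in> {[t]}" using ip unfolding is_path_def by (cases p) auto
  qed (auto simp: is_path_def)
  then show ?thesis unfolding R_opt_def by (simp add: path_reward_def)
qed

lemma path_tl:
  assumes "is_path E u t p" "u \<noteq> t"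
  shows "length p \<ge> 2" "(u, p ! 1) \<in> E" "is_path E (p ! 1) t (tl p)"
    "path_reward r p = r u (p ! 1) + path_reward r (tl p)"
proof -
  obtain x q where pq: "p = x # q" using assms unfolding is_path_def by (cases p) auto
  have xu: "x = u" using assms pq unfolding is_path_def by simp
  have qne: "q \<noteq> []" using assms pq xu unfolding is_path_def by auto
  then show "length p \<ge> 2" using pq by (cases q) auto
  show "(u, p ! 1) \<in> E" using assms qne pq xu unfolding is_path_def by auto
  have ed: "\<forall>i<length q. ((x # q) ! i, (x # q) ! Suc i) \<in> E" using assms(1) pq xu unfolding is_path_def by auto
  have "\<forall>i<length q - 1. (q ! i, q ! Suc i) \<in> E"
  proof (intro allI impI)
    fix i assume "i < length q - 1"
    then have "Suc i < length q" by simp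
    then show "(q ! i, q ! Suc i) \<in> E" using ed by fastforce
  qed
  then show "is_path E (p ! 1) t (tl p)" using assms qne pq unfolding is_path_def
    by (auto simp: hd_conv_nth)
  have "path_reward r p = (\<Sum>i < Suc (length q - 1). r (p ! i) (p ! Suc i))"
    using qne pq unfolding path_reward_def by simp
  also have "\<dots> = r (p!0) (p!1) + (\<Sum>i < length q - 1. r (p ! Suc i) (p ! Suc (Suc i)))"
    by (subst sum.lessThan_Suc_shift) simp
  finally show "path_reward r p = r u (p ! 1) + path_reward r (tl p)"
    using pq xu unfolding path_reward_def by simp
qed

lemma key:
  assumes ri: "reward_instance V E r s t" and b: "b > 1" and nc: "naive_choice V E r t b S"
    and u: "u \<in> V" "u \<noteq> t"
  shows "R_opt E r t u \<le> b * r u (S u) + R_opt E r t (S u)"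
proof -
  let ?P = "path_reward r ` {p. is_path E u t p}"
  have fin: "finite ?P" using paths_finite[OF ri u(1)] by simp
  have ne: "?P \<noteq> {}" using paths_nonempty[OF ri nc u(1)] by auto
  obtain p where p: "is_path E u t p" "R_opt E r t u = path_reward r p"
    using Max_in[OF fin ne] unfolding R_opt_def by auto
  define v where "v = p ! 1"
  have e: "(u, v) \<in> E" and tp: "is_path E v t (tl p)"
    and pr: "path_reward r p = r u v + path_reward r (tl p)"
    using path_tl[OF p(1) u(2)] unfolding v_def by auto
  have vV: "v \<in> V" using e ri unfolding reward_instance_def by auto
  have "path_reward r (tl p) \<le> R_opt E r t v"
    unfolding R_opt_def using paths_finite[OF ri vV] tp by (intro Max_ge) auto
  moreover have "r u v \<le> b * r u v"
    using e ri b unfolding reward_instance_def by (auto intro!: mult_right_mono[of 1 b, simplified])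
  moreover have "b * r u v + R_opt E r t v \<le> b * r u (S u) + R_opt E r t (S u)"
    using nc u e unfolding naive_choice_def by auto
  ultimately show ?thesis using p pr by linarith
qed

theorem claim5:
  fixes V :: "'a set" and E :: "('a \<times> 'a) set" and r :: "'a \<Rightarrow> 'a \<Rightarrow> real"
    and s t :: 'a and b :: real and S :: "'a \<Rightarrow> 'a"
  assumes "reward_instance V E r s t"
    and "b > 1"
    and "naive_choice V E r t b S"
  shows "b * R_naive r t S s \<ge> R_opt E r t s"
proof -
  have sV: "s \<in> V" using assms(1) unfolding reward_instance_def by auto
  obtain k0 where "(S^^k0) s = t" using reach[OF assms(1,3) sV] by blast
  define k where "k = (LEAST k. (S^^k) s = t)"
  have kt: "(S^^k) s = t" unfolding k_def by (rule LeastI) fact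
  have nt: "\<forall>j<k. (S^^j) s \<noteq> t" unfolding k_def using not_less_Least by blast
  have ind: "i \<le> k \<Longrightarrow> R_opt E r t s \<le> b * (\<Sum>j<i. r ((S^^j) s) ((S^^Suc j) s)) + R_opt E r t ((S^^i) s)" for i
  proof (induction i)
    case 0 then show ?case by simp
  next
    case (Suc i)
    have iV: "(S^^i) s \<in> V" using walk_in_V[OF assms(1,3) sV, of i] nt Suc.prems by auto
    have "R_opt E r t ((S^^i) s) \<le> b * r ((S^^i) s) (S ((S^^i) s)) + R_opt E r t (S ((S^^i) s))"
      using key[OF assms iV] nt Suc.prems by auto
    then show ?case using Suc by (simp add: distrib_left)
  qed
  have "R_opt E r t s \<le> b * (\<Sum>j<k. r ((S^^j) s) ((S^^Suc j) s))"
    using ind[of k] kt R_opt_t[OF assms(1)] by simp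
  then show ?thesis unfolding R_naive_def k_def Let_def by simp
qed

end
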